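(* For every $\rho\in(0,1)$ there exists an instance of the service-chain computing network model (a network $\mathcal{G}$, applications with single-task chains, increasing convex continuously differentiable cost functions $D_{ij}$, $C_i$, and input rates $\boldsymbol{r}$) together with a feasible strategy $\boldsymbol{\phi}\in\mathcal{D}_{\boldsymbol{\phi}}(\boldsymbol{r})$ that satisfies the KKT condition $$\frac{\partial T}{\partial \phi_{ij}(a,k)} \begin{cases} = \min_{j'\in\{0\}\cup\mathcal{V}} \frac{\partial T}{\partial \phi_{ij'}(a,k)}, & \text{if } \phi_{ij}(a,k)>0,\\ \geq \min_{j'\in\{0\}\cup\mathcal{V}} \frac{\partial T}{\partial \phi_{ij'}(a,k)}, & \text{if } \phi_{ij}(a,k)=0\end{cases}$$ for all $i,j,(a,k)$, such that $T(\boldsymbol{\phi}^* )/T(\boldsymbol{\phi})=\rho$, where $\boldsymbol{\phi}^*$ is a global optimal solution of $\min_{\boldsymbol{\phi}\in\mathcal{D}_{\boldsymbol{\phi}}(\boldsymbol{r})}T(\boldsymbol{\phi})$.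
   Context: Service-chain computing network model. $\mathcal{G}=(\mathcal{V},\mathcal{E})$ is a directed, strongly connected graph whose links are bidirectional ($(i,j)\in\mathcal{E}\Rightarrow(j,i)\in\mathcal{E}$). $\mathcal{A}$ is a finite set of applications; application $a$ has a destination $d_a\in\mathcal{V}$ and a chain of $|\mathcal{T}_a|$ tasks performed in order. The set of stages is $\mathcal{S}=\{(a,k): a\in\mathcal{A}, k=0,1,\dots,|\mathcal{T}_a|\}$; stage $(a,k)$ denotes packets that have completed the first $k$ tasks of $a$, and has packet size $L_{(a,k)}>0$. Exogenous input rates are $r_i(a)\ge 0$ (stage $(a,0)$ packets injected at node $i$), $\boldsymbol{r}=[r_i(a)]$. The forwarding strategy $\boldsymbol{\phi}=[\phi_{ij}(a,k)]_{(a,k)\in\mathcal{S},i\in\mathcal{V},j\in\{0\}\cup\mathcal{V}}$ has $\phi_{ij}(a,k)\in[0,1]$; for $j\in\mathcal{V}$ it is the fraction of node $i$'s stage-$(a,k)$ traffic sent to node $j$ (with $\phi_{ij}(a,k)=0$ if $(i,j)\notin\mathcal{E}$), and $\phi_{i0}(a,k)$ is the fraction sent to $i$'s local processor, which converts each stage-$(a,k)$ packet into one stage-$(a,k+1)$ packet; $\phi_{i0}(a,|\mathcal{T}_a|)=0$. Flow conservation: $\sum_{j\in\{0\}\cup\mathcal{V}}\phi_{ij}(a,k)=0$ if $k=|\mathcal{T}_a|$ and $i=d_a$, and $=1$ otherwise. Traffic $t_i(a,k)$ satisfies $t_i(a,0)=\sum_{j\in\mathcal{V}}t_j(a,0)\phi_{ji}(a,0)+r_i(a)$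 and, for $k\ge1$, $t_i(a,k)=\sum_{j\in\mathcal{V}}t_j(a,k)\phi_{ji}(a,k)+t_i(a,k-1)\phi_{i0}(a,k-1)$. Link flows $f_{ij}(a,k)=t_i(a,k)\phi_{ij}(a,k)$, processor inputs $g_i(a,k)=t_i(a,k)\phi_{i0}(a,k)$, total link flow $F_{ij}=\sum_{(a,k)\in\mathcal{S}}L_{(a,k)}f_{ij}(a,k)$, computation workload $G_i=\sum_{(a,k)\in\mathcal{S}}w_i(a,k)g_i(a,k)$ with weights $w_i(a,k)>0$. Link costs $D_{ij}(\cdot)$ and computation costs $C_i(\cdot)$ are increasing, continuously differentiable, convex functions (possibly taking value $+\infty$ outside a domain). Total cost $T(\boldsymbol{\phi})=\sum_{(i,j)\in\mathcal{E}}D_{ij}(F_{ij})+\sum_{i\in\mathcal{V}}C_i(G_i)$. The feasible set $\mathcal{D}_{\boldsymbol{\phi}}(\boldsymbol{r})$ consists of $\boldsymbol{\phi}$ satisfying flow conservation with all $D_{ij}(F_{ij})<\infty$ and $C_i(G_i)<\infty$. Marginal quantities: $\partial T/\partial t_i(a,k)$ is the marginal total cost of an additional exogenous injection of stage-$(a,k)$ traffic at node $i$ (with $\boldsymbol{\phi}$ fixed); it satisfies $\partial T/\partial t_{d_a}(a,|\mathcal{T}_a|)=0$, for $k=|\mathcal{T}_a|$: $\frac{\partial T}{\partial t_i(a,k)}=\sum_{j\in\mathcal{V}}\phi_{ij}(a,k)\big(L_{(a,k)}D'_{ij}(F_{ij})+\frac{\partial T}{\partial t_j(a,k)}\big)$,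 and for $k<|\mathcal{T}_a|$: $\frac{\partial T}{\partial t_i(a,k)}=\phi_{i0}(a,k)\big(w_i(a,k)C'_i(G_i)+\frac{\partial T}{\partial t_i(a,k+1)}\big)+\sum_{j\in\mathcal{V}}\phi_{ij}(a,k)\big(L_{(a,k)}D'_{ij}(F_{ij})+\frac{\partial T}{\partial t_j(a,k)}\big)$. The partial derivatives of $T$ are $\frac{\partial T}{\partial\phi_{ij}(a,k)}=t_i(a,k)\big(L_{(a,k)}D'_{ij}(F_{ij})+\frac{\partial T}{\partial t_j(a,k)}\big)$ for $(i,j)\in\mathcal{E}$, $\frac{\partial T}{\partial\phi_{i0}(a,k)}=t_i(a,k)\big(w_i(a,k)C'_i(G_i)+\frac{\partial T}{\partial t_i(a,k+1)}\big)$ for $k<|\mathcal{T}_a|$, and by convention $\partial T/\partial\phi_{ij}(a,k)=\infty$ for $(i,j)\notin\mathcal{E}$ and $\partial T/\partial\phi_{i0}(a,|\mathcal{T}_a|)=\infty$. *)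

theory Defs
  imports "HOL-Analysis.Analysis"
begin

text \<open>Next hop of a stage-(a,k) packet at node i: the local processor (the index 0
  of the paper) or a neighbouring node.\<close>
datatype hop = Proc | Nd nat

text \<open>L a k is the packet size of stage (a,k),
  w i a k the computation weight, Dc i j the link cost of (i,j), Cc i the computation cost
  of node i, r i a the exogenous input rate of application a at node i.\<close>
record inst =
  V     :: "nat set"
  E     :: "(nat \<times> nat) set"
  Apps  :: "nat set"
  dest  :: "nat \<Rightarrow> nat"
  ntask :: "nat \<Rightarrow> nat"
  L     :: "nat \<Rightarrow> nat \<Rightarrow> real"
  w     :: "nat \<Rightarrow> nat \<Rightarrow> nat \<Rightarrow> real"
  Dc    :: "nat \<Rightarrow> nat \<Rightarrow> real \<Rightarrow> real"
  Cc    :: "nat \<Rightarrow> real \<Rightarrow> real"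
  r     :: "nat \<Rightarrow> nat \<Rightarrow> real"

definition stages :: "inst \<Rightarrow> (nat \<times> nat) set" where
  "stages I = {(a,k). a \<in> Apps I \<and> k \<le> ntask I a}"

definition hops :: "inst \<Rightarrow> hop set" where
  "hops I = insert Proc (Nd ` V I)"

definition cost_fun :: "(real \<Rightarrow> real) \<Rightarrow> bool" where
  "cost_fun f \<longleftrightarrow> mono f \<and> convex_on UNIV f \<and> (\<forall>x. f differentiable (at x))
      \<and> continuous_on UNIV (deriv f)"

definition valid_instance :: "inst \<Rightarrow> bool" where
  "valid_instance I \<longleftrightarrow>
     finite (V I) \<and> V I \<noteq> {} \<and> E I \<subseteq> V I \<times> V I
     \<and> (\<forall>i j. (i,j) \<in> E I \<longrightarrow> (j,i) \<in> E I)
     \<and> (\<forall>i\<in>V I. \<forall>j\<in>V I. (i,j) \<in> (E I)\<^sup>*)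
     \<and> finite (Apps I) \<and> (\<forall>a\<in>Apps I. dest I a \<in> V I)
     \<and> (\<forall>(a,k)\<in>stages I. L I a k > 0)
     \<and> (\<forall>i\<in>V I. \<forall>(a,k)\<in>stages I. w I i a k > 0)
     \<and> (\<forall>(i,j)\<in>E I. cost_fun (Dc I i j))
     \<and> (\<forall>i\<in>V I. cost_fun (Cc I i))
     \<and> (\<forall>i\<in>V I. \<forall>a\<in>Apps I. r I i a \<ge> 0)"

text \<open>Strategies: phi a k i h is the fraction of node i's stage-(a,k) traffic sent to hop h.\<close>
type_synonym strategy = "nat \<Rightarrow> nat \<Rightarrow> nat \<Rightarrow> hop \<Rightarrow> real"
type_synonym nodefun = "nat \<Rightarrow> nat \<Rightarrow> nat \<Rightarrow> real"  (* a k i *)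

definition flow_conservation :: "inst \<Rightarrow> strategy \<Rightarrow> bool" where
  "flow_conservation I phi \<longleftrightarrow>
     (\<forall>(a,k)\<in>stages I. \<forall>i\<in>V I.
        (\<forall>h. 0 \<le> phi a k i h \<and> phi a k i h \<le> 1)
      \<and> (\<forall>j. (i,j) \<notin> E I \<longrightarrow> phi a k i (Nd j) = 0)
      \<and> phi a (ntask I a) i Proc = 0
      \<and> (\<Sum>h\<in>hops I. phi a k i h) = (if k = ntask I a \<and> i = dest I a then 0 else 1))"

text \<open>Traffic equations (t a k i = t_i(a,k)); t is taken to vanish outside the model's index set.\<close>
definition traffic_eq :: "inst \<Rightarrow> strategy \<Rightarrow> nodefun \<Rightarrow> bool" where
  "traffic_eq I phi t \<longleftrightarrow>
     (\<forall>a k i. \<not> ((a,k) \<in> stages I \<and> i \<in> V I) \<longrightarrow> t a k i = 0)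
   \<and> (\<forall>(a,k)\<in>stages I. \<forall>i\<in>V I.
        t a k i = (\<Sum>j\<in>V I. t a k j * phi a k j (Nd i))
                  + (if k = 0 then r I i a else t a (k - 1) i * phi a (k - 1) i Proc))"

definition traffic :: "inst \<Rightarrow> strategy \<Rightarrow> nodefun" where
  "traffic I phi = (THE t. traffic_eq I phi t)"

definition linkflow :: "inst \<Rightarrow> strategy \<Rightarrow> nat \<Rightarrow> nat \<Rightarrow> real" where
  "linkflow I phi i j = (\<Sum>(a,k)\<in>stages I. L I a k * (traffic I phi a k i * phi a k i (Nd j)))"

definition workload :: "inst \<Rightarrow> strategy \<Rightarrow> nat \<Rightarrow> real" where
  "workload I phi i = (\<Sum>(a,k)\<in>stages I. w I i a k * (traffic I phi a k i * phi a k i Proc))"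

definition total_cost :: "inst \<Rightarrow> strategy \<Rightarrow> real" where
  "total_cost I phi = (\<Sum>(i,j)\<in>E I. Dc I i j (linkflow I phi i j)) + (\<Sum>i\<in>V I. Cc I i (workload I phi i))"

text \<open>Feasible set: flow conservation, with the traffic determined uniquely by the traffic
  equations (all costs are real-valued, hence finite).\<close>
definition feasible :: "inst \<Rightarrow> strategy set" where
  "feasible I = {phi. flow_conservation I phi \<and> (\<exists>!t. traffic_eq I phi t)}"

text \<open>Marginal costs m a k i = dT/dt_i(a,k), defined by the recursive equations.\<close>
definition marginal_eq :: "inst \<Rightarrow> strategy \<Rightarrow> nodefun \<Rightarrow> bool" where
  "marginal_eq I phi m \<longleftrightarrow>
     (\<forall>a k i. \<not> ((a,k) \<in> stages I \<and> i \<in> V I) \<longrightarrow> m a k i = 0)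
   \<and> (\<forall>a\<in>Apps I. m a (ntask I a) (dest I a) = 0)
   \<and> (\<forall>(a,k)\<in>stages I. \<forall>i\<in>V I.
        m a k i = (if k < ntask I a
                   then phi a k i Proc * (w I i a k * deriv (Cc I i) (workload I phi i) + m a (k+1) i)
                   else 0)
                  + (\<Sum>j\<in>V I. phi a k i (Nd j) *
                        (L I a k * deriv (Dc I i j) (linkflow I phi i j) + m a k j)))"

definition marginal :: "inst \<Rightarrow> strategy \<Rightarrow> nodefun" where
  "marginal I phi = (THE m. marginal_eq I phi m)"

text \<open>Partial derivatives dT/dphi_{ih}(a,k), with value infinity for non-links and for
  processing beyond the last task.\<close>
definition dT_dphi :: "inst \<Rightarrow> strategy \<Rightarrow> nat \<Rightarrow> nat \<Rightarrow> nat \<Rightarrow> hop \<Rightarrow> ereal" where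
  "dT_dphi I phi a k i h = (case h of
      Nd j \<Rightarrow> (if (i,j) \<in> E I
               then ereal (traffic I phi a k i *
                      (L I a k * deriv (Dc I i j) (linkflow I phi i j) + marginal I phi a k j))
               else \<infinity>)
    | Proc \<Rightarrow> (if k < ntask I a
               then ereal (traffic I phi a k i *
                      (w I i a k * deriv (Cc I i) (workload I phi i) + marginal I phi a (k+1) i))
               else \<infinity>))"

definition KKT :: "inst \<Rightarrow> strategy \<Rightarrow> bool" where
  "KKT I phi \<longleftrightarrow> (\<exists>!m. marginal_eq I phi m) \<and>
     (\<forall>(a,k)\<in>stages I. \<forall>i\<in>V I. \<forall>h\<in>hops I.
        (phi a k i h > 0 \<longrightarrow>
           dT_dphi I phi a k i h = Min ((\<lambda>h'. dT_dphi I phi a k i h') ` hops I))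
      \<and> (phi a k i h = 0 \<longrightarrow>
           dT_dphi I phi a k i h \<ge> Min ((\<lambda>h'. dT_dphi I phi a k i h') ` hops I)))"

end

theory Submission
  imports Defs
begin
definition f0 :: "real \<Rightarrow> real" where "f0 x = (max x 0)^2"

lemma f0_deriv: "(f0 has_real_derivative 2 * max x 0) (at x)"
proof -
  have "x > 0 \<or> x < 0 \<or> x = 0" by auto
  moreover
  { assume h: "x > 0"
    have "((\<lambda>y. y^2) has_real_derivative 2 * max x 0) (at x)"
      using h by (auto intro!: derivative_eq_intros)
    hence ?thesis
      by (rule has_field_derivative_transform_within_open[where S="{0<..}"]) (use h in \<open>auto simp: f0_def\<close>) }
  moreover
  { assume h: "x < 0"
    have "((\<lambda>y. 0) has_real_derivative 2 * max x 0) (at x)" using h by simp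
    hence ?thesis
      by (rule has_field_derivative_transform_within_open[where S="{..<0}"]) (use h in \<open>auto simp: f0_def\<close>) }
  moreover
  { assume h: "x = 0"
    have e: "(\<lambda>h. (f0 h - f0 0) / h) = (\<lambda>h. max h 0)"
      by (auto simp: f0_def power2_eq_square fun_eq_iff max_def)
    have "((\<lambda>h::real. max h 0) \<longlongrightarrow> max 0 0) (at 0)"
      by (intro tendsto_intros)
    hence ?thesis using h by (simp add: DERIV_def e) }
  ultimately show ?thesis by blast
qed

lemma cost_f0: "cost_fun (\<lambda>x. b + f0 x)"
proof -
  have d: "\<And>x. ((\<lambda>x. b + f0 x) has_real_derivative 2 * max x 0) (at x)"
    using f0_deriv by (auto intro!: derivative_eq_intros)
  have dd: "deriv (\<lambda>x. b + f0 x) = (\<lambda>x. 2 * max x 0)"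
    using d DERIV_imp_deriv by blast
  show ?thesis unfolding cost_fun_def dd
  proof (intro conjI allI)
    show "mono (\<lambda>x. b + f0 x)"
      by (auto simp: mono_def f0_def intro!: power_mono)
    show "convex_on UNIV (\<lambda>x. b + f0 x)"
      by (rule convex_on_realI[OF _ d]) auto
    show "(\<lambda>x. b + f0 x) differentiable (at x)" for x
      using d real_differentiable_def by blast
    show "continuous_on UNIV (\<lambda>x::real. 2 * max x 0)"
      by (intro continuous_intros)
  qed
qed

lemma cost_const: "cost_fun (\<lambda>x. c)"
  unfolding cost_fun_def by (auto simp: mono_def convex_on_const)

definition EXI :: "real \<Rightarrow> inst" where
  "EXI b = \<lparr>V = {0,1}, E = {(0,1),(1,0)}, Apps = {0}, dest = (\<lambda>_. 0), ntask = (\<lambda>_. 1),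
     L = (\<lambda>_ _. 1), w = (\<lambda>_ _ _. 1), Dc = (\<lambda>_ _ _. 0),
     Cc = (\<lambda>i x. if i = 0 then b + f0 x else b), r = (\<lambda>i a. if i = 0 then 1 else 0)\<rparr>"

definition phi1 :: strategy where
  "phi1 = (\<lambda>a k i h. if (k = 0 \<and> i = 0 \<and> h = Proc) \<or> (i = 1 \<and> h = Nd 0) then 1 else 0)"
definition phi2 :: strategy where
  "phi2 = (\<lambda>a k i h. if (k = 0 \<and> i = 0 \<and> h = Nd 1) \<or> (k = 0 \<and> i = 1 \<and> h = Proc)
                       \<or> (k = 1 \<and> i = 1 \<and> h = Nd 0) then 1 else 0)"
definition t1 :: nodefun where "t1 = (\<lambda>a k i. if a = 0 \<and> k \<le> 1 \<and> i = 0 then 1 else 0)"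
definition t2 :: nodefun where "t2 = (\<lambda>a k i. if a = 0 \<and> k \<le> 1 \<and> i \<le> 1 then 1 else 0)"

lemma stages_EXI: "stages (EXI b) = {(0,0),(0,1)}"
  by (auto simp: stages_def EXI_def)
lemma hops_EXI: "hops (EXI b) = {Proc, Nd 0, Nd 1}"
  by (auto simp: hops_def EXI_def)

lemma valid_EXI: "valid_instance (EXI b)"
proof -
  have conn: "\<forall>i\<in>{0::nat,1}. \<forall>j\<in>{0,1}. (i,j) \<in> {(0::nat,1::nat),(1,0)}\<^sup>*"
    by (auto intro: converse_rtrancl_into_rtrancl)
  show ?thesis
    unfolding valid_instance_def stages_EXI
    using conn by (auto simp: EXI_def cost_const cost_f0)
qed

lemma fc1: "flow_conservation (EXI b) phi1"
  unfolding flow_conservation_def stages_EXI hops_EXI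
  by (auto simp: EXI_def phi1_def)
lemma fc2: "flow_conservation (EXI b) phi2"
  unfolding flow_conservation_def stages_EXI hops_EXI
  by (auto simp: EXI_def phi2_def)

lemma te1: "traffic_eq (EXI b) phi1 t \<longleftrightarrow> t = t1"
proof
  assume h: "traffic_eq (EXI b) phi1 t"
  have z: "\<And>a k i. \<not> ((a,k) \<in> {(0,0),(0,1)} \<and> i \<in> {0,1}) \<Longrightarrow> t a k i = 0"
  proof -
    have "\<forall>a k i. \<not> ((a,k) \<in> stages (EXI b) \<and> i \<in> V (EXI b)) \<longrightarrow> t a k i = 0"
      using h unfolding traffic_eq_def by blast
    moreover have "V (EXI b) = {0,1}" by (simp add: EXI_def)
    ultimately show "\<And>a k i. \<not> ((a,k) \<in> {(0,0),(0,1)} \<and> i \<in> {0,1}) \<Longrightarrow> t a k i = 0"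
      unfolding stages_EXI by auto
  qed
  have eq: "\<forall>(a,k)\<in>{(0::nat,0::nat),(0,1)}. \<forall>i\<in>{0::nat,1}.
        t a k i = (\<Sum>j\<in>{0,1}. t a k j * phi1 a k j (Nd i))
                  + (if k = 0 then (if i = 0 then 1 else 0) else t a (k - 1) i * phi1 a (k - 1) i Proc)"
    using h unfolding traffic_eq_def stages_EXI by (simp add: EXI_def)
  hence vals: "t 0 0 0 = 1" "t 0 0 1 = 0" "t 0 1 0 = 1" "t 0 1 1 = 0"
    by (auto simp: phi1_def)
  show "t = t1"
  proof (intro ext)
    fix a k i
    show "t a k i = t1 a k i"
    proof (cases "(a,k)\<in>{(0::nat,0::nat),(0,1)} \<and> i\<in>{0::nat,1}")
      case True thus ?thesis using vals by (auto simp: t1_def)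
    next
      case False thus ?thesis using z[OF False] by (auto simp: t1_def)
    qed
  qed
next
  assume "t = t1"
  thus "traffic_eq (EXI b) phi1 t"
    unfolding traffic_eq_def stages_EXI by (auto simp: EXI_def t1_def phi1_def)
qed

lemma te2: "traffic_eq (EXI b) phi2 t \<longleftrightarrow> t = t2"
proof
  assume h: "traffic_eq (EXI b) phi2 t"
  have z: "\<And>a k i. \<not> ((a,k) \<in> {(0,0),(0,1)} \<and> i \<in> {0,1}) \<Longrightarrow> t a k i = 0"
  proof -
    have "\<forall>a k i. \<not> ((a,k) \<in> stages (EXI b) \<and> i \<in> V (EXI b)) \<longrightarrow> t a k i = 0"
      using h unfolding traffic_eq_def by blast
    moreover have "V (EXI b) = {0,1}" by (simp add: EXI_def)
    ultimately show "\<And>a k i. \<not> ((a,k) \<in> {(0,0),(0,1)} \<and> i \<in> {0,1}) \<Longrightarrow> t a k i = 0"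
      unfolding stages_EXI by auto
  qed
  have eq: "\<forall>(a,k)\<in>{(0::nat,0::nat),(0,1)}. \<forall>i\<in>{0::nat,1}.
        t a k i = (\<Sum>j\<in>{0,1}. t a k j * phi2 a k j (Nd i))
                  + (if k = 0 then (if i = 0 then 1 else 0) else t a (k - 1) i * phi2 a (k - 1) i Proc)"
    using h unfolding traffic_eq_def stages_EXI by (simp add: EXI_def)
  hence vals: "t 0 0 0 = 1" "t 0 0 1 = 1" "t 0 1 0 = 1" "t 0 1 1 = 1"
    by (auto simp: phi2_def)
  show "t = t2"
  proof (intro ext)
    fix a k i
    show "t a k i = t2 a k i"
    proof (cases "(a,k)\<in>{(0::nat,0::nat),(0,1)} \<and> i\<in>{0::nat,1}")
      case True thus ?thesis using vals by (auto simp: t2_def)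
    next
      case False thus ?thesis using z[OF False] by (auto simp: t2_def)
    qed
  qed
next
  assume "t = t2"
  thus "traffic_eq (EXI b) phi2 t"
    unfolding traffic_eq_def stages_EXI by (auto simp: EXI_def t2_def phi2_def)
qed

lemma traffic1: "traffic (EXI b) phi1 = t1"
  unfolding traffic_def using te1 by blast
lemma traffic2: "traffic (EXI b) phi2 = t2"
  unfolding traffic_def using te2 by blast

definition m1 :: "real \<Rightarrow> nodefun" where
  "m1 c = (\<lambda>a k i. if a = 0 \<and> k = 0 \<and> i \<le> 1 then c else 0)"

lemma me1: "marginal_eq (EXI b) phi1 m \<longleftrightarrow> m = m1 (deriv (Cc (EXI b) 0) (workload (EXI b) phi1 0))"
  (is "_ \<longleftrightarrow> _ = m1 ?c")
proof
  assume h: "marginal_eq (EXI b) phi1 m"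
  have z: "\<And>a k i. \<not> ((a,k) \<in> {(0,0),(0,1)} \<and> i \<in> {0,1}) \<Longrightarrow> m a k i = 0"
  proof -
    have "\<forall>a k i. \<not> ((a,k) \<in> stages (EXI b) \<and> i \<in> V (EXI b)) \<longrightarrow> m a k i = 0"
      using h unfolding marginal_eq_def by blast
    moreover have "V (EXI b) = {0,1}" by (simp add: EXI_def)
    ultimately show "\<And>a k i. \<not> ((a,k) \<in> {(0,0),(0,1)} \<and> i \<in> {0,1}) \<Longrightarrow> m a k i = 0"
      unfolding stages_EXI by auto
  qed
  have eq: "\<forall>(a,k)\<in>stages (EXI b). \<forall>i\<in>V (EXI b).
        m a k i = (if k < ntask (EXI b) a
                   then phi1 a k i Proc * (w (EXI b) i a k * deriv (Cc (EXI b) i) (workload (EXI b) phi1 i) + m a (k+1) i)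
                   else 0)
                  + (\<Sum>j\<in>V (EXI b). phi1 a k i (Nd j) *
                        (L (EXI b) a k * deriv (Dc (EXI b) i j) (linkflow (EXI b) phi1 i j) + m a k j))"
    using h unfolding marginal_eq_def by blast
  have "V (EXI b) = {0,1}" "ntask (EXI b) = (\<lambda>_. 1)" "L (EXI b) = (\<lambda>_ _. 1)" "w (EXI b) = (\<lambda>_ _ _. 1)"
    "Dc (EXI b) = (\<lambda>_ _ _. 0)" by (simp_all add: EXI_def)
  with eq have eq': "\<forall>(a,k)\<in>{(0::nat,0::nat),(0,1)}. \<forall>i\<in>{0::nat,1}.
        m a k i = (if k < 1
                   then phi1 a k i Proc * (deriv (Cc (EXI b) i) (workload (EXI b) phi1 i) + m a (k+1) i)
                   else 0)
                  + (\<Sum>j\<in>{0,1}. phi1 a k i (Nd j) * m a k j)"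
    unfolding stages_EXI by simp
  hence vals: "m 0 0 0 = ?c" "m 0 0 1 = ?c" "m 0 1 0 = 0" "m 0 1 1 = 0"
    by (auto simp: phi1_def)
  show "m = m1 ?c"
  proof (intro ext)
    fix a k i
    show "m a k i = m1 ?c a k i"
    proof (cases "(a,k)\<in>{(0::nat,0::nat),(0,1)} \<and> i\<in>{0::nat,1}")
      case True thus ?thesis using vals by (auto simp: m1_def)
    next
      case False thus ?thesis using z[OF False] by (auto simp: m1_def)
    qed
  qed
next
  assume "m = m1 ?c"
  thus "marginal_eq (EXI b) phi1 m"
    unfolding marginal_eq_def stages_EXI by (auto simp: EXI_def m1_def phi1_def)
qed

lemma marginal1: "marginal (EXI b) phi1 = m1 (deriv (Cc (EXI b) 0) (workload (EXI b) phi1 0))"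
  unfolding marginal_def using me1 by blast

lemma cost1: "total_cost (EXI b) phi1 = 2*b + 1"
  unfolding total_cost_def workload_def stages_EXI traffic1
  by (simp add: EXI_def t1_def phi1_def f0_def)
lemma cost2: "total_cost (EXI b) phi2 = 2*b"
  unfolding total_cost_def workload_def stages_EXI traffic2
  by (simp add: EXI_def t2_def phi2_def f0_def)
lemma cost_lb: "total_cost (EXI b) psi \<ge> 2*b"
  unfolding total_cost_def by (simp add: EXI_def f0_def)

lemma dT1:
  "dT_dphi (EXI b) phi1 0 0 0 Proc = ereal (deriv (Cc (EXI b) 0) (workload (EXI b) phi1 0))"
  "dT_dphi (EXI b) phi1 0 0 0 (Nd 0) = \<infinity>"
  "dT_dphi (EXI b) phi1 0 0 0 (Nd 1) = ereal (deriv (Cc (EXI b) 0) (workload (EXI b) phi1 0))"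
  "dT_dphi (EXI b) phi1 0 0 1 Proc = 0"
  "dT_dphi (EXI b) phi1 0 0 1 (Nd 0) = 0"
  "dT_dphi (EXI b) phi1 0 0 1 (Nd 1) = \<infinity>"
  "dT_dphi (EXI b) phi1 0 1 0 Proc = \<infinity>"
  "dT_dphi (EXI b) phi1 0 1 0 (Nd 0) = \<infinity>"
  "dT_dphi (EXI b) phi1 0 1 0 (Nd 1) = 0"
  "dT_dphi (EXI b) phi1 0 1 1 Proc = \<infinity>"
  "dT_dphi (EXI b) phi1 0 1 1 (Nd 0) = 0"
  "dT_dphi (EXI b) phi1 0 1 1 (Nd 1) = \<infinity>"
  unfolding dT_dphi_def traffic1 marginal1
  by (simp_all add: t1_def m1_def EXI_def zero_ereal_def)

lemma V_EXI: "V (EXI b) = {0,1}" by (simp add: EXI_def)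

lemma KKT1: "KKT (EXI b) phi1"
proof -
  have u: "\<exists>!m. marginal_eq (EXI b) phi1 m" by (simp add: me1)
  show ?thesis
    unfolding KKT_def stages_EXI hops_EXI V_EXI
    using u by (simp add: dT1 dT1[unfolded One_nat_def]) (simp add: phi1_def)
qed

lemma Apps_EXI: "Apps (EXI b) = {0}" "ntask (EXI b) = (\<lambda>_. 1)" by (simp_all add: EXI_def)

lemma feas1: "phi1 \<in> feasible (EXI b)"
  unfolding feasible_def using fc1 te1 by auto
lemma feas2: "phi2 \<in> feasible (EXI b)"
  unfolding feasible_def using fc2 te2 by auto

theorem proposition1:
  fixes \<rho> :: real
  assumes "0 < \<rho>" and "\<rho> < 1"
  shows "\<exists>I phi phis.
           valid_instance I \<and> (\<forall>a\<in>Apps I. ntask I a = 1)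
         \<and> phi \<in> feasible I \<and> KKT I phi
         \<and> phis \<in> feasible I \<and> (\<forall>psi\<in>feasible I. total_cost I phis \<le> total_cost I psi)
         \<and> total_cost I phis / total_cost I phi = \<rho>"
proof -
  define b where "b = \<rho> / (2 * (1 - \<rho>))"
  have ratio: "2*b / (2*b+1) = \<rho>"
    using assms by (simp add: b_def field_simps)
  have "valid_instance (EXI b) \<and> (\<forall>a\<in>Apps (EXI b). ntask (EXI b) a = 1)
         \<and> phi1 \<in> feasible (EXI b) \<and> KKT (EXI b) phi1
         \<and> phi2 \<in> feasible (EXI b) \<and> (\<forall>psi\<in>feasible (EXI b). total_cost (EXI b) phi2 \<le> total_cost (EXI b) psi)
         \<and> total_cost (EXI b) phi2 / total_cost (EXI b) phi1 = \<rho>"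
    using valid_EXI[of b] KKT1[of b] feas1[of b] feas2[of b] cost_lb[of b] ratio
    unfolding cost1 cost2 Apps_EXI by simp
  thus ?thesis by blast
qed
end
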